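(* Let $G,H,F,K$ be graphs such that there is a quantum homomorphism from $G$ to $F$ and a quantum homomorphism from $H$ to $K$. Then there are quantum homomorphisms (1) from $G\,\square\,H$ to $F\,\square\,K$; (2) from $G\times H$ to $F\times K$; (3) from $G\boxtimes H$ to $F\boxtimes K$; (4) from $G * H$ to $F * K$; (5) from $G[H]$ to $F[K]$.
   Context: Graphs are finite, simple and undirected; no vertex is adjacent to itself. All products below have vertex set $V(G)\times V(H)$. Cartesian product $G\,\square\,H$: $(u_1,v_1)\sim(u_2,v_2)$ iff ($u_1\sim u_2$ and $v_1=v_2$) or ($u_1=u_2$ and $v_1\sim v_2$). Categorical product $G\times H$: iff $u_1\sim u_2$ and $v_1\sim v_2$. Strong product $G\boxtimes H$: the edge union of $G\times H$ and $G\,\square\,H$. Disjunctive product $G*H$: iff $u_1\sim u_2$ or $v_1\sim v_2$. Lexicographic product $G[H]$: iff $u_1\sim u_2$, or ($u_1=u_2$ and $v_1\sim v_2$). For a graph $F$ and integer $d\ge1$, the measurement graph $M(F,d)$ has as vertices all tuples $(E_w)_{w\in V(F)}$ of orthogonal projectors in $\mathbb{C}^{d\times d}$ with $\sum_w E_w=I$; $(E_w)$ and $(E'_w)$ are adjacent iff $E_wE'_{w'}=0$ for all $w,w'$ with $w\not\sim w'$ (including $w=w'$). A quantum homomorphism from $G$ to $F$ is a graph homomorphism from $G$ to $M(F,d)$ for some $d$. *)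

theory Defs
  imports Complex_Main "Jordan_Normal_Form.Schur_Decomposition"
begin

type_synonym 'a graph = "'a set \<times> ('a \<Rightarrow> 'a \<Rightarrow> bool)"

definition verts :: "'a graph \<Rightarrow> 'a set" where "verts G = fst G"
definition adj :: "'a graph \<Rightarrow> 'a \<Rightarrow> 'a \<Rightarrow> bool" where "adj G = snd G"

definition graph :: "'a graph \<Rightarrow> bool" where
  "graph G \<longleftrightarrow> finite (verts G)
     \<and> (\<forall>x y. adj G x y \<longrightarrow> x \<in> verts G \<and> y \<in> verts G)
     \<and> (\<forall>x y. adj G x y \<longrightarrow> adj G y x)
     \<and> (\<forall>x. \<not> adj G x x)"

definition pair_adj :: "'a graph \<Rightarrow> 'b graph \<Rightarrow> ('a \<times> 'b \<Rightarrow> 'a \<times> 'b \<Rightarrow> bool) \<Rightarrow> ('a \<times> 'b) graph" where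
  "pair_adj G H R = (verts G \<times> verts H,
     \<lambda>p q. p \<in> verts G \<times> verts H \<and> q \<in> verts G \<times> verts H \<and> R p q)"

definition cartesian_prod :: "'a graph \<Rightarrow> 'b graph \<Rightarrow> ('a \<times> 'b) graph" where
  "cartesian_prod G H = pair_adj G H (\<lambda>(u1,v1) (u2,v2).
     (adj G u1 u2 \<and> v1 = v2) \<or> (u1 = u2 \<and> adj H v1 v2))"

definition categorical_prod :: "'a graph \<Rightarrow> 'b graph \<Rightarrow> ('a \<times> 'b) graph" where
  "categorical_prod G H = pair_adj G H (\<lambda>(u1,v1) (u2,v2). adj G u1 u2 \<and> adj H v1 v2)"

definition strong_prod :: "'a graph \<Rightarrow> 'b graph \<Rightarrow> ('a \<times> 'b) graph" where
  "strong_prod G H = pair_adj G H (\<lambda>p q. adj (categorical_prod G H) p q \<or> adj (cartesian_prod G H) p q)"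

definition disjunctive_prod :: "'a graph \<Rightarrow> 'b graph \<Rightarrow> ('a \<times> 'b) graph" where
  "disjunctive_prod G H = pair_adj G H (\<lambda>(u1,v1) (u2,v2). adj G u1 u2 \<or> adj H v1 v2)"

definition lexico_prod :: "'a graph \<Rightarrow> 'b graph \<Rightarrow> ('a \<times> 'b) graph" where
  "lexico_prod G H = pair_adj G H (\<lambda>(u1,v1) (u2,v2). adj G u1 u2 \<or> (u1 = u2 \<and> adj H v1 v2))"

definition orth_proj :: "nat \<Rightarrow> complex mat \<Rightarrow> bool" where
  "orth_proj d P \<longleftrightarrow> P \<in> carrier_mat d d \<and> P * P = P \<and> mat_adjoint P = P"

definition mat_sum :: "nat \<Rightarrow> 'c set \<Rightarrow> ('c \<Rightarrow> complex mat) \<Rightarrow> complex mat" where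
  "mat_sum d S f = mat d d (\<lambda>(i,j). \<Sum>w\<in>S. f w $$ (i,j))"

definition measurement :: "'c graph \<Rightarrow> nat \<Rightarrow> ('c \<Rightarrow> complex mat) \<Rightarrow> bool" where
  "measurement F d E \<longleftrightarrow> (\<forall>w\<in>verts F. orth_proj d (E w)) \<and> mat_sum d (verts F) E = 1\<^sub>m d"

definition meas_adj :: "'c graph \<Rightarrow> nat \<Rightarrow> ('c \<Rightarrow> complex mat) \<Rightarrow> ('c \<Rightarrow> complex mat) \<Rightarrow> bool" where
  "meas_adj F d E E' \<longleftrightarrow> measurement F d E \<and> measurement F d E' \<and>
     (\<forall>w\<in>verts F. \<forall>w'\<in>verts F. \<not> adj F w w' \<longrightarrow> E w * E' w' = 0\<^sub>m d d)"

text \<open>Quantum homomorphism G -> F: a graph homomorphism G -> M(F,d) for some d >= 1.\<close>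
definition quantum_hom :: "'a graph \<Rightarrow> 'c graph \<Rightarrow> bool" where
  "quantum_hom G F \<longleftrightarrow> (\<exists>d\<ge>1. \<exists>\<rho> :: 'a \<Rightarrow> 'c \<Rightarrow> complex mat.
     (\<forall>g\<in>verts G. measurement F d (\<rho> g)) \<and>
     (\<forall>g g'. adj G g g' \<longrightarrow> meas_adj F d (\<rho> g) (\<rho> g')))"

end

theory Submission
  imports Defs
begin

lemma adj_dim: "A \<in> carrier_mat d d \<Longrightarrow> mat_adjoint A \<in> carrier_mat d d"
proof -
  assume A: "A \<in> carrier_mat d d"
  have "mat_adjoint A \<in> carrier_mat (length (map conjugate (cols A))) (dim_row A)"
    unfolding mat_adjoint_def by (rule mat_of_rows_carrier(1))
  moreover have "length (map conjugate (cols A)) = d" "dim_row A = d" using A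
    by (simp_all only: length_map cols_length carrier_mat_def mem_Collect_eq)
  ultimately show ?thesis by simp
qed
lemma adj_idx: "A \<in> carrier_mat d d \<Longrightarrow> i < d \<Longrightarrow> j < d \<Longrightarrow> mat_adjoint A $$ (i,j) = cnj (A $$ (j,i))"
proof -
  assume A: "A \<in> carrier_mat d d" and ij: "i < d" "j < d"
  have l: "length (map conjugate (cols A)) = d" and r: "dim_row A = d" and c: "dim_col A = d" using A
    by (simp_all only: length_map cols_length carrier_mat_def mem_Collect_eq)
  have "mat_adjoint A $$ (i,j) = map conjugate (cols A) ! i $ j"
    unfolding mat_adjoint_def mat_of_rows_def using ij l r by (simp only: index_mat split)
  also have "\<dots> = conjugate (col A i) $ j" using ij c by (simp only: nth_map cols_length cols_nth)
  also have "\<dots> = cnj (A $$ (j,i))" using ij r by (simp add: col_def)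
  finally show ?thesis .
qed

lemma mult_idx: "A \<in> carrier_mat d d \<Longrightarrow> B \<in> carrier_mat d d \<Longrightarrow> i < d \<Longrightarrow> j < d \<Longrightarrow>
   ((A::complex mat) * B) $$ (i,j) = (\<Sum>k<d. A $$ (i,k) * B $$ (k,j))"
proof -
  assume A: "A \<in> carrier_mat d d" and B: "B \<in> carrier_mat d d" and ij: "i < d" "j < d"
  have "(A * B) $$ (i,j) = Matrix.scalar_prod (Matrix.row A i) (Matrix.col B j)" using A B ij by (simp only: index_mult_mat carrier_mat_def mem_Collect_eq)
  also have "\<dots> = (\<Sum>k<d. A $$ (i,k) * B $$ (k,j))"
    unfolding Matrix.scalar_prod_def using A B ij by (intro sum.cong) (auto simp: lessThan_atLeast0 Matrix.row_def Matrix.col_def)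
  finally show ?thesis .
qed

lemma adj_mult: fixes A B :: "complex mat" assumes "A \<in> carrier_mat d d" "B \<in> carrier_mat d d"
  shows "mat_adjoint (A * B) = mat_adjoint B * mat_adjoint A"
proof (rule eq_matI)
  have AB: "A * B \<in> carrier_mat d d" using assms by auto
  show "dim_row (mat_adjoint (A * B)) = dim_row (mat_adjoint B * mat_adjoint A)"
    using adj_dim[OF AB] adj_dim[OF assms(2)] by auto
  show "dim_col (mat_adjoint (A * B)) = dim_col (mat_adjoint B * mat_adjoint A)"
    using adj_dim[OF AB] adj_dim[OF assms(1)] by auto
  fix i j assume "i < dim_row (mat_adjoint B * mat_adjoint A)" "j < dim_col (mat_adjoint B * mat_adjoint A)"
  then have ij: "i < d" "j < d" using adj_dim[OF assms(2)] adj_dim[OF assms(1)] by auto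
  show "mat_adjoint (A * B) $$ (i, j) = (mat_adjoint B * mat_adjoint A) $$ (i, j)"
  proof -
    have "mat_adjoint (A * B) $$ (i, j) = cnj (\<Sum>k<d. A $$ (j,k) * B $$ (k,i))"
      by (simp only: adj_idx[OF AB ij] mult_idx[OF assms ij(2) ij(1)])
    also have "\<dots> = (\<Sum>k<d. cnj (B $$ (k,i)) * cnj (A $$ (j,k)))"
      by (simp only: cnj_sum complex_cnj_mult mult.commute)
    also have "\<dots> = (\<Sum>k<d. mat_adjoint B $$ (i,k) * mat_adjoint A $$ (k,j))"
      by (intro sum.cong refl) (simp only: adj_idx[OF assms(1)] adj_idx[OF assms(2)] ij lessThan_iff)
    also have "\<dots> = (mat_adjoint B * mat_adjoint A) $$ (i, j)"
      by (rule mult_idx[OF adj_dim[OF assms(2)] adj_dim[OF assms(1)] ij, symmetric])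
    finally show ?thesis .
  qed
qed

lemma mat_sum_dim: "mat_sum d V f \<in> carrier_mat d d"
  unfolding mat_sum_def by auto

lemma mat_sum_idx: "i < d \<Longrightarrow> j < d \<Longrightarrow> mat_sum d V f $$ (i,j) = (\<Sum>w\<in>V. f w $$ (i,j))"
  unfolding mat_sum_def by auto

lemma mult3_idx: fixes A S B :: "complex mat"
  assumes A: "A \<in> carrier_mat d d" and S: "S \<in> carrier_mat d d" and B: "B \<in> carrier_mat d d"
    and ij: "i < d" "j < d"
  shows "(A * S * B) $$ (i,j) = (\<Sum>k<d. (\<Sum>l<d. A $$ (i,l) * S $$ (l,k)) * B $$ (k,j))"
proof -
  have AS: "A * S \<in> carrier_mat d d" using A S by auto
  show ?thesis
    unfolding mult_idx[OF AS B ij]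
    by (intro sum.cong refl arg_cong2[where f="(*)"]) (simp only: mult_idx[OF A S ij(1)] lessThan_iff)
qed

lemma sum_lin: fixes A B :: "complex mat"
  assumes A: "A \<in> carrier_mat d d" and B: "B \<in> carrier_mat d d"
    and f: "\<And>v. v \<in> V \<Longrightarrow> f v \<in> carrier_mat d d" and ij: "i < d" "j < d"
  shows "(A * mat_sum d V f * B) $$ (i,j) = (\<Sum>v\<in>V. (A * f v * B) $$ (i,j))"
proof -
  have S: "mat_sum d V f \<in> carrier_mat d d" by (rule mat_sum_dim)
  have "(A * mat_sum d V f * B) $$ (i,j) = (\<Sum>k<d. (\<Sum>l<d. A $$ (i,l) * mat_sum d V f $$ (l,k)) * B $$ (k,j))"
    by (rule mult3_idx[OF A S B ij])
  also have "\<dots> = (\<Sum>k<d. (\<Sum>l<d. A $$ (i,l) * (\<Sum>v\<in>V. f v $$ (l,k))) * B $$ (k,j))"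
    by (simp add: mat_sum_idx)
  also have "\<dots> = (\<Sum>v\<in>V. (\<Sum>k<d. (\<Sum>l<d. A $$ (i,l) * f v $$ (l,k)) * B $$ (k,j)))"
    by (simp only: sum_distrib_left sum_distrib_right sum.swap[of _ V] mult.assoc)
  also have "\<dots> = (\<Sum>v\<in>V. (A * f v * B) $$ (i,j))"
    by (intro sum.cong refl) (simp only: mult3_idx[OF A f B ij])
  finally show ?thesis .
qed

lemma adjM_diag: assumes "M \<in> carrier_mat d d" "b < d"
  shows "(mat_adjoint M * M) $$ (b,b) = of_real (\<Sum>a<d. (cmod (M $$ (a,b)))^2)"
proof -
  have "(mat_adjoint M * M) $$ (b,b) = (\<Sum>a<d. M $$ (a,b) * cnj (M $$ (a,b)))"
    using assms adj_dim[OF assms(1)]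
    by (simp del: index_mult_mat add: mult_idx adj_idx mult.commute)
  also have "\<dots> = of_real (\<Sum>a<d. (cmod (M $$ (a,b)))^2)"
    by (simp only: of_real_sum complex_norm_square)
  finally show ?thesis .
qed

lemma PQP: fixes P Q :: "complex mat"
  assumes P: "orth_proj d P" and Q: "orth_proj d Q"
  shows "P * Q * P = mat_adjoint (Q * P) * (Q * P)"
proof -
  have Pc: "P \<in> carrier_mat d d" and Qc: "Q \<in> carrier_mat d d" using P Q by (auto simp: orth_proj_def)
  have "mat_adjoint (Q * P) = P * Q" using P Q by (simp add: adj_mult[OF Qc Pc] orth_proj_def)
  then have "mat_adjoint (Q * P) * (Q * P) = P * (Q * Q) * P"
    using Pc Qc by (simp add: assoc_mult_mat[of _ d d _ d _ d])
  then show ?thesis using Q by (simp add: orth_proj_def)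
qed

lemma meas_orth:
  assumes m: "measurement F d E" and fin: "finite (verts F)"
    and w: "w \<in> verts F" and w': "w' \<in> verts F" and ne: "w \<noteq> w'"
  shows "E w' * E w = 0\<^sub>m d d"
proof -
  let ?V = "verts F"
  define P where "P = E w"
  have op: "\<And>j. j \<in> ?V \<Longrightarrow> orth_proj d (E j)" using m by (auto simp: measurement_def)
  have cr: "\<And>j. j \<in> ?V \<Longrightarrow> E j \<in> carrier_mat d d" using op by (auto simp: orth_proj_def)
  have Pc: "P \<in> carrier_mat d d" using cr w P_def by auto
  have PP: "P * P = P" using op[OF w] P_def by (auto simp: orth_proj_def)
  have sumI: "mat_sum d ?V E = 1\<^sub>m d" using m by (auto simp: measurement_def)
  define r where "r j = (\<Sum>b<d. \<Sum>a<d. (cmod ((E j * P) $$ (a,b)))^2)" for j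
  have t: "(\<Sum>b<d. (P * E j * P) $$ (b,b)) = of_real (r j)" if "j \<in> ?V" for j
  proof -
    have EPc: "E j * P \<in> carrier_mat d d" using cr[OF that] Pc by auto
    show ?thesis unfolding PQP[OF op[OF w, folded P_def] op[OF that]] r_def of_real_sum
      by (intro sum.cong refl) (simp add: adjM_diag[OF EPc])
  qed
  have "(\<Sum>j\<in>?V. (\<Sum>b<d. (P * E j * P) $$ (b,b))) = (\<Sum>b<d. (\<Sum>j\<in>?V. (P * E j * P) $$ (b,b)))"
    by (rule sum.swap)
  also have "\<dots> = (\<Sum>b<d. (P * mat_sum d ?V E * P) $$ (b,b))"
    by (rule sum.cong[OF refl], rule sum_lin[OF Pc Pc cr, symmetric]) auto
  also have "\<dots> = (\<Sum>b<d. P $$ (b,b))" by (simp only: sumI right_mult_one_mat[OF Pc] PP)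
  finally have tot0: "(\<Sum>j\<in>?V. (\<Sum>b<d. (P * E j * P) $$ (b,b))) = (\<Sum>b<d. P $$ (b,b))" .
  have "(\<Sum>j\<in>?V. of_real (r j)) = (\<Sum>j\<in>?V. (\<Sum>b<d. (P * E j * P) $$ (b,b)))"
    by (rule sum.cong[OF refl], rule t[symmetric])
  with tot0 have tot: "(\<Sum>j\<in>?V. of_real (r j)) = (\<Sum>b<d. P $$ (b,b))" by (rule trans[rotated])
  have tw: "of_real (r w) = (\<Sum>b<d. P $$ (b,b))"
  proof -
    have "P * E w * P = P" by (simp only: P_def[symmetric] PP)
    then show ?thesis using t[OF w] by (simp only:)
  qed
  have "(\<Sum>j\<in>?V. of_real (r j)) = of_real (r w) + (\<Sum>j\<in>?V - {w}. of_real (r j))"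
    using fin w by (rule sum.remove)
  then have "(\<Sum>j\<in>?V - {w}. of_real (r j)) = (0::complex)" using tot tw by (metis add_left_cancel add_0_right)
  then have z: "(\<Sum>j\<in>?V - {w}. r j) = 0" by (simp only: of_real_sum[symmetric] of_real_eq_0_iff)
  have rnn: "\<And>j. r j \<ge> 0" unfolding r_def by (intro sum_nonneg) auto
  have "r w' = 0" using z rnn fin w' ne by (subst (asm) sum_nonneg_eq_0_iff) auto
  then have "\<forall>b<d. \<forall>a<d. (cmod ((E w' * P) $$ (a,b)))^2 = 0"
    unfolding r_def by (subst (asm) sum_nonneg_eq_0_iff) (auto intro!: sum_nonneg simp: sum_nonneg_eq_0_iff)
  then have ent: "\<And>a b. a < d \<Longrightarrow> b < d \<Longrightarrow> (E w' * P) $$ (a,b) = 0" by auto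
  show ?thesis using ent cr[OF w'] Pc unfolding P_def[symmetric]
    by (intro eq_matI) auto
qed



definition kron :: "nat \<Rightarrow> nat \<Rightarrow> complex mat \<Rightarrow> complex mat \<Rightarrow> complex mat" where
  "kron d1 d2 A B = Matrix.mat (d1*d2) (d1*d2) (\<lambda>(i,j). A $$ (i div d2, j div d2) * B $$ (i mod d2, j mod d2))"

lemma kron_dim: "kron d1 d2 A B \<in> carrier_mat (d1*d2) (d1*d2)"
  unfolding kron_def by auto

lemma kron_dims[simp]: "dim_row (kron d1 d2 A B) = d1*d2" "dim_col (kron d1 d2 A B) = d1*d2"
  unfolding kron_def by (simp_all only: dim_row_mat dim_col_mat)

lemma kron_idx: "i < d1*d2 \<Longrightarrow> j < d1*d2 \<Longrightarrow>
  kron d1 d2 A B $$ (i,j) = A $$ (i div d2, j div d2) * B $$ (i mod d2, j mod d2)"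
  unfolding kron_def by auto

lemma divmod_bounds: "(i::nat) < d1*d2 \<Longrightarrow> i div d2 < d1 \<and> i mod d2 < d2"
  by (metis less_mult_imp_div_less mod_less_divisor mult_0_right nat_neq_iff not_less0 mult.commute)

lemma sum_split: fixes d1 d2 :: nat and g :: "nat \<Rightarrow> nat \<Rightarrow> complex" shows "(\<Sum>k<d1*d2. g (k div d2) (k mod d2)) = (\<Sum>a<d1. \<Sum>b<d2. (g a b :: complex))"
proof -
  have bnd: "a*d2+b < d1*d2" if "a < d1" "b < d2" for a b
  proof -
    have "a*d2 + b < a*d2 + d2" using that by auto
    also have "\<dots> = (a+1)*d2" by simp
    also have "\<dots> \<le> d1*d2" using that by (intro mult_right_mono) auto
    finally show ?thesis .
  qed
  have "(\<Sum>k<d1*d2. g (k div d2) (k mod d2)) = (\<Sum>p\<in>{..<d1}\<times>{..<d2}. g (fst p) (snd p))"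
    by (rule sum.reindex_bij_witness[where i="\<lambda>p. fst p*d2+snd p" and j="\<lambda>k. (k div d2, k mod d2)"])
       (auto simp: divmod_bounds bnd)
  also have "\<dots> = (\<Sum>a<d1. \<Sum>b<d2. g a b)" by (simp add: sum.cartesian_product case_prod_unfold)
  finally show ?thesis .
qed

lemma kron_mult:
  assumes A: "A \<in> carrier_mat d1 d1" and C: "C \<in> carrier_mat d1 d1"
    and B: "B \<in> carrier_mat d2 d2" and D: "D \<in> carrier_mat d2 d2"
  shows "kron d1 d2 A B * kron d1 d2 C D = kron d1 d2 (A * C) (B * D)"
proof (rule eq_matI)
  fix i j assume "i < dim_row (kron d1 d2 (A * C) (B * D))" "j < dim_col (kron d1 d2 (A * C) (B * D))"
  then have ij: "i < d1*d2" "j < d1*d2" by (simp_all only: kron_dims dim_row_mat dim_col_mat)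
  note bi = divmod_bounds[OF ij(1)] and bj = divmod_bounds[OF ij(2)]
  have "(kron d1 d2 A B * kron d1 d2 C D) $$ (i,j)
      = (\<Sum>k<d1*d2. (A $$ (i div d2, k div d2) * C $$ (k div d2, j div d2)) * (B $$ (i mod d2, k mod d2) * D $$ (k mod d2, j mod d2)))"
    by (subst mult_idx[OF kron_dim kron_dim ij], rule sum.cong[OF refl])
       (simp only: lessThan_iff kron_idx ij mult.assoc mult.left_commute)
  also have "\<dots> = (\<Sum>a<d1. \<Sum>b<d2. (A $$ (i div d2, a) * C $$ (a, j div d2)) * (B $$ (i mod d2, b) * D $$ (b, j mod d2)))"
    by (rule sum_split[where g="\<lambda>a b. (A $$ (i div d2, a) * C $$ (a, j div d2)) * (B $$ (i mod d2, b) * D $$ (b, j mod d2))"])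
  also have "\<dots> = (\<Sum>a<d1. A $$ (i div d2, a) * C $$ (a, j div d2)) * (\<Sum>b<d2. B $$ (i mod d2, b) * D $$ (b, j mod d2))"
    by (simp add: sum_product)
  also have "\<dots> = kron d1 d2 (A * C) (B * D) $$ (i,j)"
    unfolding kron_idx[OF ij] mult_idx[OF A C conjunct1[OF bi] conjunct1[OF bj]]
      mult_idx[OF B D conjunct2[OF bi] conjunct2[OF bj]] by (rule refl)
  finally show "(kron d1 d2 A B * kron d1 d2 C D) $$ (i,j) = kron d1 d2 (A * C) (B * D) $$ (i,j)" .
qed (simp_all only: kron_dims index_mult_mat)

lemma kron_adj:
  assumes A: "A \<in> carrier_mat d1 d1" and B: "B \<in> carrier_mat d2 d2"
  shows "mat_adjoint (kron d1 d2 A B) = kron d1 d2 (mat_adjoint A) (mat_adjoint B)"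
proof (rule eq_matI)
  have c: "mat_adjoint (kron d1 d2 A B) \<in> carrier_mat (d1*d2) (d1*d2)" by (rule adj_dim[OF kron_dim])
  fix i j assume "i < dim_row (kron d1 d2 (mat_adjoint A) (mat_adjoint B))" "j < dim_col (kron d1 d2 (mat_adjoint A) (mat_adjoint B))"
  then have ij: "i < d1*d2" "j < d1*d2" by (simp_all only: kron_dims)
  note bi = divmod_bounds[OF ij(1)] and bj = divmod_bounds[OF ij(2)]
  show "mat_adjoint (kron d1 d2 A B) $$ (i, j) = kron d1 d2 (mat_adjoint A) (mat_adjoint B) $$ (i, j)"
    unfolding adj_idx[OF kron_dim ij] kron_idx[OF ij] kron_idx[OF ij(2) ij(1)]
      adj_idx[OF A conjunct1[OF bi] conjunct1[OF bj]] adj_idx[OF B conjunct2[OF bi] conjunct2[OF bj]]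
    by (rule complex_cnj_mult)
next
  have c: "mat_adjoint (kron d1 d2 A B) \<in> carrier_mat (d1*d2) (d1*d2)" by (rule adj_dim[OF kron_dim])
  then show "dim_row (mat_adjoint (kron d1 d2 A B)) = dim_row (kron d1 d2 (mat_adjoint A) (mat_adjoint B))"
    "dim_col (mat_adjoint (kron d1 d2 A B)) = dim_col (kron d1 d2 (mat_adjoint A) (mat_adjoint B))"
    by (simp_all only: kron_dims carrier_mat_def mem_Collect_eq)
qed

lemma kron_zero: assumes "A = 0\<^sub>m d1 d1 \<or> B = 0\<^sub>m d2 d2"
  shows "kron d1 d2 A B = 0\<^sub>m (d1*d2) (d1*d2)"
proof (rule eq_matI)
  fix i j assume "i < dim_row (0\<^sub>m (d1*d2) (d1*d2) :: complex mat)" "j < dim_col (0\<^sub>m (d1*d2) (d1*d2) :: complex mat)"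
  then have ij: "i < d1*d2" "j < d1*d2" by simp_all
  note bi = divmod_bounds[OF ij(1)] and bj = divmod_bounds[OF ij(2)]
  show "kron d1 d2 A B $$ (i, j) = 0\<^sub>m (d1*d2) (d1*d2) $$ (i, j)"
    unfolding kron_idx[OF ij] index_zero_mat(1)[OF ij]
    using assms
  proof
    assume "A = 0\<^sub>m d1 d1" then show "A $$ (i div d2, j div d2) * B $$ (i mod d2, j mod d2) = 0"
      using bi bj by simp
  next
    assume "B = 0\<^sub>m d2 d2" then show "A $$ (i div d2, j div d2) * B $$ (i mod d2, j mod d2) = 0"
      using bi bj by simp
  qed
qed (simp_all only: kron_dims index_zero_mat)

lemma kron_proj: "orth_proj d1 A \<Longrightarrow> orth_proj d2 B \<Longrightarrow> orth_proj (d1*d2) (kron d1 d2 A B)"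
  unfolding orth_proj_def using kron_dim kron_mult kron_adj by metis

lemma kron_sum:
  assumes "finite V" "finite W" "mat_sum d1 V E = 1\<^sub>m d1" "mat_sum d2 W E' = 1\<^sub>m d2"
  shows "mat_sum (d1*d2) (V \<times> W) (\<lambda>(v,w). kron d1 d2 (E v) (E' w)) = 1\<^sub>m (d1*d2)"
proof (rule eq_matI)
  fix i j assume "i < dim_row (1\<^sub>m (d1 * d2) :: complex mat)" "j < dim_col (1\<^sub>m (d1 * d2) :: complex mat)"
  then have ij: "i < d1*d2" "j < d1*d2" by simp_all
  note bi = divmod_bounds[OF ij(1)] and bj = divmod_bounds[OF ij(2)]
  have "mat_sum d1 V E $$ (i div d2, j div d2) = 1\<^sub>m d1 $$ (i div d2, j div d2)" using assms(3) by (rule arg_cong)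
  then have e1: "(\<Sum>v\<in>V. E v $$ (i div d2, j div d2)) = (if i div d2 = j div d2 then 1 else 0)"
    unfolding mat_sum_idx[OF conjunct1[OF bi] conjunct1[OF bj]] index_one_mat(1)[OF conjunct1[OF bi] conjunct1[OF bj]] .
  have "mat_sum d2 W E' $$ (i mod d2, j mod d2) = 1\<^sub>m d2 $$ (i mod d2, j mod d2)" using assms(4) by (rule arg_cong)
  then have e2: "(\<Sum>w\<in>W. E' w $$ (i mod d2, j mod d2)) = (if i mod d2 = j mod d2 then 1 else 0)"
    unfolding mat_sum_idx[OF conjunct2[OF bi] conjunct2[OF bj]] index_one_mat(1)[OF conjunct2[OF bi] conjunct2[OF bj]] .
  have iff: "i = j \<longleftrightarrow> i div d2 = j div d2 \<and> i mod d2 = j mod d2" by (metis div_mult_mod_eq)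
  have "mat_sum (d1*d2) (V \<times> W) (\<lambda>(v,w). kron d1 d2 (E v) (E' w)) $$ (i,j)
     = (\<Sum>(v,w)\<in>V\<times>W. E v $$ (i div d2, j div d2) * E' w $$ (i mod d2, j mod d2))"
    unfolding mat_sum_idx[OF ij] by (rule sum.cong[OF refl]) (simp only: case_prod_unfold kron_idx[OF ij])
  also have "\<dots> = (\<Sum>v\<in>V. E v $$ (i div d2, j div d2)) * (\<Sum>w\<in>W. E' w $$ (i mod d2, j mod d2))"
    by (simp only: sum_product sum.cartesian_product)
  also have "\<dots> = (if i = j then 1 else 0)" unfolding e1 e2 iff by simp
  also have "\<dots> = 1\<^sub>m (d1*d2) $$ (i,j)" by (simp only: index_one_mat(1)[OF ij])
  finally show "mat_sum (d1*d2) (V \<times> W) (\<lambda>(v,w). kron d1 d2 (E v) (E' w)) $$ (i,j) = 1\<^sub>m (d1*d2) $$ (i,j)" .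
next
  have "mat_sum (d1*d2) (V \<times> W) (\<lambda>(v,w). kron d1 d2 (E v) (E' w)) \<in> carrier_mat (d1*d2) (d1*d2)"
    by (rule mat_sum_dim)
  then show "dim_row (mat_sum (d1*d2) (V \<times> W) (\<lambda>(v,w). kron d1 d2 (E v) (E' w))) = dim_row (1\<^sub>m (d1 * d2) :: complex mat)"
    "dim_col (mat_sum (d1*d2) (V \<times> W) (\<lambda>(v,w). kron d1 d2 (E v) (E' w))) = dim_col (1\<^sub>m (d1 * d2) :: complex mat)"
    by simp_all
qed



lemma prod_qhom:
  fixes G :: "'a graph" and H :: "'b graph" and F :: "'c graph" and K :: "'d graph"
    and P :: "('a \<times> 'b) graph" and Q :: "('c \<times> 'd) graph"
  assumes gF: "graph F" and gK: "graph K"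
   and qG: "quantum_hom G F" and qH: "quantum_hom H K"
   and vP: "verts P = verts G \<times> verts H" and vQ: "verts Q = verts F \<times> verts K"
   and aP: "\<And>p q. adj P p q \<Longrightarrow> p \<in> verts P \<and> q \<in> verts P"
   and key: "\<And>g h g' h' f k f' k'. adj P (g,h) (g',h') \<Longrightarrow> f \<in> verts F \<Longrightarrow> f' \<in> verts F \<Longrightarrow>
      k \<in> verts K \<Longrightarrow> k' \<in> verts K \<Longrightarrow> \<not> adj Q (f,k) (f',k') \<Longrightarrow>
      (adj G g g' \<and> \<not> adj F f f') \<or> (g = g' \<and> f \<noteq> f') \<or> (adj H h h' \<and> \<not> adj K k k') \<or> (h = h' \<and> k \<noteq> k')"
  shows "quantum_hom P Q"
proof -
  obtain d1 \<rho>1 where d1: "d1 \<ge> 1" and m1: "\<forall>g\<in>verts G. measurement F d1 (\<rho>1 g)"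
    and a1: "\<forall>g g'. adj G g g' \<longrightarrow> meas_adj F d1 (\<rho>1 g) (\<rho>1 g')"
    using qG unfolding quantum_hom_def by blast
  obtain d2 \<rho>2 where d2: "d2 \<ge> 1" and m2: "\<forall>h\<in>verts H. measurement K d2 (\<rho>2 h)"
    and a2: "\<forall>h h'. adj H h h' \<longrightarrow> meas_adj K d2 (\<rho>2 h) (\<rho>2 h')"
    using qH unfolding quantum_hom_def by blast
  have fF: "finite (verts F)" and fK: "finite (verts K)" using gF gK by (auto simp: graph_def)
  define \<rho> where "\<rho> = (\<lambda>(g,h) (f,k). kron d1 d2 (\<rho>1 g f) (\<rho>2 h k))"
  have meas: "measurement Q (d1*d2) (\<rho> (g,h))" if g: "g \<in> verts G" and h: "h \<in> verts H" for g h
  proof -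
    have "\<forall>w\<in>verts Q. orth_proj (d1*d2) (\<rho> (g,h) w)"
      using m1 m2 g h unfolding vQ \<rho>_def measurement_def by (auto intro: kron_proj)
    moreover have "mat_sum (d1*d2) (verts Q) (\<rho> (g,h)) = 1\<^sub>m (d1*d2)"
      unfolding vQ \<rho>_def using m1 m2 g h fF fK
      by (simp add: kron_sum measurement_def)
    ultimately show ?thesis unfolding measurement_def by simp
  qed
  have z1: "\<rho>1 g f * \<rho>1 g' f' = 0\<^sub>m d1 d1"
    if "g \<in> verts G" "f \<in> verts F" "f' \<in> verts F" "(adj G g g' \<and> \<not> adj F f f') \<or> (g = g' \<and> f \<noteq> f')" for g g' f f'
    using that a1 meas_orth[OF _ fF, of d1 "\<rho>1 g" f' f] m1 unfolding meas_adj_def by auto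
  have z2: "\<rho>2 h k * \<rho>2 h' k' = 0\<^sub>m d2 d2"
    if "h \<in> verts H" "k \<in> verts K" "k' \<in> verts K" "(adj H h h' \<and> \<not> adj K k k') \<or> (h = h' \<and> k \<noteq> k')" for h h' k k'
    using that a2 meas_orth[OF _ fK, of d2 "\<rho>2 h" k' k] m2 unfolding meas_adj_def by auto
  have cr1: "\<rho>1 g f \<in> carrier_mat d1 d1" if "g \<in> verts G" "f \<in> verts F" for g f
    using m1 that by (auto simp: measurement_def orth_proj_def)
  have cr2: "\<rho>2 h k \<in> carrier_mat d2 d2" if "h \<in> verts H" "k \<in> verts K" for h k
    using m2 that by (auto simp: measurement_def orth_proj_def)
  have adjP: "meas_adj Q (d1*d2) (\<rho> p) (\<rho> q)" if pq: "adj P p q" for p q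
  proof -
    obtain g h g' h' where p: "p = (g,h)" and q: "q = (g',h')" by force
    have gh: "g \<in> verts G" "h \<in> verts H" "g' \<in> verts G" "h' \<in> verts H" using aP[OF pq] vP p q by auto
    have "\<rho> p w * \<rho> q w' = 0\<^sub>m (d1*d2) (d1*d2)"
      if w: "w \<in> verts Q" "w' \<in> verts Q" "\<not> adj Q w w'" for w w'
    proof -
      obtain f k f' k' where wf: "w = (f,k)" and wf': "w' = (f',k')" by force
      have fk: "f \<in> verts F" "k \<in> verts K" "f' \<in> verts F" "k' \<in> verts K" using w wf wf' vQ by auto
      have "\<rho> p w * \<rho> q w' = kron d1 d2 (\<rho>1 g f * \<rho>1 g' f') (\<rho>2 h k * \<rho>2 h' k')"
        unfolding p q wf wf' \<rho>_def using gh fk by (simp add: kron_mult cr1 cr2)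
      also have "\<dots> = 0\<^sub>m (d1*d2) (d1*d2)"
        using key[of g h g' h' f f' k k'] pq p q w(3) wf wf' fk gh z1 z2
        by (intro kron_zero) blast
      finally show ?thesis .
    qed
    then show ?thesis unfolding meas_adj_def using meas gh p q by auto
  qed
  show ?thesis unfolding quantum_hom_def
    using d1 d2 meas adjP vP
    by (intro exI[of _ "d1*d2"] conjI exI[of _ \<rho>]) (auto simp: one_le_mult_iff)
qed



lemma pv[simp]: "verts (pair_adj G H R) = verts G \<times> verts H"
  by (simp add: pair_adj_def verts_def)
lemma pa[simp]: "adj (pair_adj G H R) p q \<longleftrightarrow> p \<in> verts G \<times> verts H \<and> q \<in> verts G \<times> verts H \<and> R p q"
  by (simp add: pair_adj_def adj_def verts_def)

theorem lemma7p1: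
  fixes G :: "'a graph" and H :: "'b graph" and F :: "'c graph" and K :: "'d graph"
  assumes "graph G" "graph H" "graph F" "graph K"
    and "quantum_hom G F" and "quantum_hom H K"
  shows "quantum_hom (cartesian_prod G H) (cartesian_prod F K)
    \<and> quantum_hom (categorical_prod G H) (categorical_prod F K)
    \<and> quantum_hom (strong_prod G H) (strong_prod F K)
    \<and> quantum_hom (disjunctive_prod G H) (disjunctive_prod F K)
    \<and> quantum_hom (lexico_prod G H) (lexico_prod F K)"
proof (intro conjI)
  note pq = prod_qhom[OF assms(3,4,5,6)]
  show "quantum_hom (cartesian_prod G H) (cartesian_prod F K)"
    by (rule pq) (auto simp: cartesian_prod_def)
  show "quantum_hom (categorical_prod G H) (categorical_prod F K)"
    by (rule pq) (auto simp: categorical_prod_def)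
  show "quantum_hom (strong_prod G H) (strong_prod F K)"
    by (rule pq) (auto simp: strong_prod_def categorical_prod_def cartesian_prod_def)
  show "quantum_hom (disjunctive_prod G H) (disjunctive_prod F K)"
    by (rule pq) (auto simp: disjunctive_prod_def)
  show "quantum_hom (lexico_prod G H) (lexico_prod F K)"
    by (rule pq) (auto simp: lexico_prod_def)
qed


end
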